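(* At the optimum of the sum-rate maximization problem (relaxed as in the KKT analysis), the Lagrange multipliers $\mu_1$ and $\mu_2$ associated with the constraints $\bar R_{1r}=\bar R_{r2}$ and $\bar R_{2r}=\bar R_{r1}$ satisfy $0<\mu_1<1$ and $0<\mu_2<1$; any other values of $(\mu_1,\mu_2)$ either violate one of these two rate-balancing constraints or cannot yield the maximum sum rate.
   Context: Half-duplex bidirectional relay network (users 1, 2, relay $r$, no direct link), slots $i=1,\dots,N$, $N\to\infty$, block fading with squared channel amplitudes $S_1(i),S_2(i)$ from continuous distributions, $C(x)=\log_2(1+x)$. Modes: $\mathcal M_1$ user 1$\to$relay, $\mathcal M_2$ user 2$\to$relay, $\mathcal M_3$ both users$\to$relay, $\mathcal M_4$ relay$\to$user 1, $\mathcal M_5$ relay$\to$user 2, $\mathcal M_6$ relay broadcast. Average rates: $\bar R_{1r}$ (user 1 to relay, from $\mathcal M_1,\mathcal M_3$), $\bar R_{2r}$ (user 2 to relay, from $\mathcal M_2,\mathcal M_3$), $\bar R_{r1}=\lim_N\frac1N\sum_i(q_4(i)+q_6(i))C(P_r(i)S_1(i))$, $\bar R_{r2}=\lim_N\frac1N\sum_i(q_5(i)+q_6(i))C(P_r(i)S_2(i))$, with $q_k(i)$ the mode selection indicators. The problem maximizes $\bar R_{1r}+\bar R_{2r}$ subject to $\bar R_{1r}=\bar R_{r2}$, $\bar R_{2r}=\bar R_{r1}$, a total average power constraint $\bar P_1+\bar P_2+\bar P_r\le P_t$ with multiplier $\gamma\ge0$, nonnegative powers, $\sum_kq_k(i)=1$,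 $0\le q_k(i)\le1$, and time-sharing $t(i)\in[0,1]$ in mode $\mathcal M_3$. The mode selected in each slot maximizes the metrics $\Lambda_1=(1-\mu_1)C(P_1S_1)-\gamma P_1$, $\Lambda_2=(1-\mu_2)C(P_2S_2)-\gamma P_2$, $\Lambda_3=(1-\mu_1)C_{12r}+(1-\mu_2)C_{21r}-\gamma(P_1+P_2)$, $\Lambda_4=\mu_2C(P_rS_1)-\gamma P_r$, $\Lambda_5=\mu_1C(P_rS_2)-\gamma P_r$, $\Lambda_6=\mu_1C(P_rS_2)+\mu_2C(P_rS_1)-\gamma P_r$, each evaluated at the power maximizing it over nonnegative powers. *)

theory Defs
  imports "HOL-Probability.Probability"
begin

definition Cap :: "real \<Rightarrow> real" where
  "Cap x = log 2 (1 + x)"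

text \<open>Decision taken in one slot: relaxed mode indicators q k (k = 1..6),
  transmit powers of user 1, user 2 and the relay, and the time-sharing
  parameter t used in the multiple-access mode M3.\<close>
record decision =
  q  :: "nat \<Rightarrow> real"
  p1 :: real
  p2 :: real
  pr :: real
  ts :: real

text \<open>Channel state of a slot: s = (S1, S2), squared channel amplitudes.\<close>
type_synonym chstate = "real \<times> real"

definition admissible :: "decision \<Rightarrow> bool" where
  "admissible d \<longleftrightarrow>
     (\<forall>k\<in>{1..6}. 0 \<le> q d k \<and> q d k \<le> 1) \<and> (\<Sum>k=1..6. q d k) = 1 \<and>
     0 \<le> p1 d \<and> 0 \<le> p2 d \<and> 0 \<le> pr d \<and> 0 \<le> ts d \<and> ts d \<le> 1"

text \<open>Rates of the two users in mode M3 (multiple access), time sharing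
  between the two corner points of the MAC capacity region.\<close>
definition C12r :: "chstate \<Rightarrow> decision \<Rightarrow> real" where
  "C12r s d = ts d * Cap (p1 d * fst s)
              + (1 - ts d) * Cap (p1 d * fst s / (1 + p2 d * snd s))"

definition C21r :: "chstate \<Rightarrow> decision \<Rightarrow> real" where
  "C21r s d = ts d * Cap (p2 d * snd s / (1 + p1 d * fst s))
              + (1 - ts d) * Cap (p2 d * snd s)"

definition rate_1r :: "chstate \<Rightarrow> decision \<Rightarrow> real" where
  "rate_1r s d = q d 1 * Cap (p1 d * fst s) + q d 3 * C12r s d"

definition rate_2r :: "chstate \<Rightarrow> decision \<Rightarrow> real" where
  "rate_2r s d = q d 2 * Cap (p2 d * snd s) + q d 3 * C21r s d"

definition rate_r1 :: "chstate \<Rightarrow> decision \<Rightarrow> real" where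
  "rate_r1 s d = (q d 4 + q d 6) * Cap (pr d * fst s)"

definition rate_r2 :: "chstate \<Rightarrow> decision \<Rightarrow> real" where
  "rate_r2 s d = (q d 5 + q d 6) * Cap (pr d * snd s)"

definition power :: "decision \<Rightarrow> real" where
  "power d = (q d 1 + q d 3) * p1 d + (q d 2 + q d 3) * p2 d
             + (q d 4 + q d 5 + q d 6) * pr d"

text \<open>Long-term averages over the slots (N \<rightarrow> \<infinity>) are the expectations w.r.t.
  the fading distribution M of (S1, S2) (ergodic block fading).\<close>
type_synonym policy = "chstate \<Rightarrow> decision"

definition avg :: "chstate measure \<Rightarrow> (chstate \<Rightarrow> real) \<Rightarrow> real" where
  "avg M f = integral\<^sup>L M f"

definition feasible :: "chstate measure \<Rightarrow> real \<Rightarrow> policy \<Rightarrow> bool" where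
  "feasible M Pt pol \<longleftrightarrow>
     (\<forall>s. admissible (pol s)) \<and>
     integrable M (\<lambda>s. rate_1r s (pol s)) \<and> integrable M (\<lambda>s. rate_2r s (pol s)) \<and>
     integrable M (\<lambda>s. rate_r1 s (pol s)) \<and> integrable M (\<lambda>s. rate_r2 s (pol s)) \<and>
     integrable M (\<lambda>s. power (pol s)) \<and>
     avg M (\<lambda>s. rate_1r s (pol s)) = avg M (\<lambda>s. rate_r2 s (pol s)) \<and>
     avg M (\<lambda>s. rate_2r s (pol s)) = avg M (\<lambda>s. rate_r1 s (pol s)) \<and>
     avg M (\<lambda>s. power (pol s)) \<le> Pt"

definition sum_rate :: "chstate measure \<Rightarrow> policy \<Rightarrow> real" where
  "sum_rate M pol = avg M (\<lambda>s. rate_1r s (pol s)) + avg M (\<lambda>s. rate_2r s (pol s))"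

definition optimal :: "chstate measure \<Rightarrow> real \<Rightarrow> policy \<Rightarrow> bool" where
  "optimal M Pt pol \<longleftrightarrow> feasible M Pt pol \<and>
     (\<forall>pol'. feasible M Pt pol' \<longrightarrow> sum_rate M pol' \<le> sum_rate M pol)"

definition Lam :: "real \<Rightarrow> real \<Rightarrow> real \<Rightarrow> nat \<Rightarrow> chstate \<Rightarrow> decision \<Rightarrow> real" where
  "Lam \<mu>1 \<mu>2 \<gamma> k s d =
     (if k = 1 then (1 - \<mu>1) * Cap (p1 d * fst s) - \<gamma> * p1 d
      else if k = 2 then (1 - \<mu>2) * Cap (p2 d * snd s) - \<gamma> * p2 d
      else if k = 3 then (1 - \<mu>1) * C12r s d + (1 - \<mu>2) * C21r s d - \<gamma> * (p1 d + p2 d)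
      else if k = 4 then \<mu>2 * Cap (pr d * fst s) - \<gamma> * pr d
      else if k = 5 then \<mu>1 * Cap (pr d * snd s) - \<gamma> * pr d
      else \<mu>1 * Cap (pr d * snd s) + \<mu>2 * Cap (pr d * fst s) - \<gamma> * pr d)"

definition kkt_multipliers ::
  "chstate measure \<Rightarrow> real \<Rightarrow> policy \<Rightarrow> real \<Rightarrow> real \<Rightarrow> real \<Rightarrow> bool" where
  "kkt_multipliers M Pt pol \<mu>1 \<mu>2 \<gamma> \<longleftrightarrow>
     0 \<le> \<gamma> \<and> \<gamma> * (avg M (\<lambda>s. power (pol s)) - Pt) = 0 \<and>
     (AE s in M. \<exists>k\<in>{1..6}. q (pol s) k = 1 \<and>
        (\<forall>j\<in>{1..6}. \<forall>d. admissible d \<longrightarrow>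
            Lam \<mu>1 \<mu>2 \<gamma> j s d \<le> Lam \<mu>1 \<mu>2 \<gamma> k s (pol s)))"

end

theory Submission
  imports Defs
begin

lemma Cap0[simp]: "Cap 0 = 0" by (simp add: Cap_def)
lemma Cap_nonneg: "x \<ge> 0 \<Longrightarrow> Cap x \<ge> 0" by (simp add: Cap_def)
lemma Cap_pos: "x > 0 \<Longrightarrow> Cap x > 0" by (simp add: Cap_def)
lemma Cap_mono: "0 \<le> x \<Longrightarrow> x \<le> y \<Longrightarrow> Cap x \<le> Cap y" by (simp add: Cap_def)
lemma Cap_zero_iff: "x \<ge> 0 \<Longrightarrow> Cap x = 0 \<longleftrightarrow> x = 0"
  using Cap_pos[of x] by (cases "x = 0") auto

lemma q_others:
  assumes "admissible d" "k \<in> {1..6}" "q d k = 1" "j \<in> {1..6}" "j \<noteq> k"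
  shows "q d j = 0"
proof -
  have s: "q d 1 + q d 2 + q d 3 + q d 4 + q d 5 + q d 6 = 1"
    using assms(1) by (simp add: admissible_def eval_nat_numeral)
  have nn: "\<forall>i\<in>{1..6}. 0 \<le> q d i" using assms(1) by (simp add: admissible_def)
  have "k = 1 \<or> k = 2 \<or> k = 3 \<or> k = 4 \<or> k = 5 \<or> k = 6" "j = 1 \<or> j = 2 \<or> j = 3 \<or> j = 4 \<or> j = 5 \<or> j = 6"
    using assms(2,4) by auto
  moreover have "0 \<le> q d 1" "0 \<le> q d 2" "0 \<le> q d 3" "0 \<le> q d 4" "0 \<le> q d 5" "0 \<le> q d 6"
    using nn by auto
  ultimately show ?thesis using s assms(3,5) by (elim disjE; simp; linarith)
qed


lemma div_le_self': "0 \<le> (x::real) \<Longrightarrow> 0 \<le> y \<Longrightarrow> x / (1 + y) \<le> x"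
proof -
  assume "0 \<le> x" "0 \<le> y"
  then have "x * 1 \<le> x * (1 + y)" by (intro mult_left_mono) auto
  then show ?thesis using \<open>0 \<le> y\<close> by (simp add: divide_le_eq)
qed

lemma C12r_bounds:
  assumes "admissible d" "fst s \<ge> 0" "snd s \<ge> 0"
  shows "0 \<le> C12r s d" "C12r s d \<le> Cap (p1 d * fst s)"
proof -
  have t: "0 \<le> ts d" "ts d \<le> 1" "0 \<le> p1 d" "0 \<le> p2 d" using assms(1) by (auto simp: admissible_def)
  have a: "0 \<le> p1 d * fst s" using t assms by simp
  have b: "0 \<le> p2 d * snd s" using t assms by simp
  have c: "0 \<le> p1 d * fst s / (1 + p2 d * snd s)" using a b by simp
  have e: "p1 d * fst s / (1 + p2 d * snd s) \<le> p1 d * fst s"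
    using a b div_le_self' by blast
  have f1: "0 \<le> Cap (p1 d * fst s)" using Cap_nonneg a by blast
  have f2: "0 \<le> Cap (p1 d * fst s / (1 + p2 d * snd s))" using Cap_nonneg c by blast
  have f3: "Cap (p1 d * fst s / (1 + p2 d * snd s)) \<le> Cap (p1 d * fst s)" using Cap_mono c e by blast
  show "0 \<le> C12r s d" unfolding C12r_def using t f1 f2 by simp
  have "C12r s d \<le> ts d * Cap (p1 d * fst s) + (1 - ts d) * Cap (p1 d * fst s)"
    unfolding C12r_def using t f3 by (intro add_mono mult_left_mono) auto
  then show "C12r s d \<le> Cap (p1 d * fst s)" by (simp add: algebra_simps)
qed

lemma C21r_bounds:
  assumes "admissible d" "fst s \<ge> 0" "snd s \<ge> 0"
  shows "0 \<le> C21r s d" "C21r s d \<le> Cap (p2 d * snd s)"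
proof -
  have t: "0 \<le> ts d" "ts d \<le> 1" "0 \<le> p1 d" "0 \<le> p2 d" using assms(1) by (auto simp: admissible_def)
  have a: "0 \<le> p1 d * fst s" using t assms by simp
  have b: "0 \<le> p2 d * snd s" using t assms by simp
  have c: "0 \<le> p2 d * snd s / (1 + p1 d * fst s)" using a b by simp
  have e: "p2 d * snd s / (1 + p1 d * fst s) \<le> p2 d * snd s"
    using a b div_le_self' by blast
  have f1: "0 \<le> Cap (p2 d * snd s)" using Cap_nonneg b by blast
  have f2: "0 \<le> Cap (p2 d * snd s / (1 + p1 d * fst s))" using Cap_nonneg c by blast
  have f3: "Cap (p2 d * snd s / (1 + p1 d * fst s)) \<le> Cap (p2 d * snd s)" using Cap_mono c e by blast
  show "0 \<le> C21r s d" unfolding C21r_def using t f1 f2 by simp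
  have "C21r s d \<le> ts d * Cap (p2 d * snd s) + (1 - ts d) * Cap (p2 d * snd s)"
    unfolding C21r_def using t f3 by (intro add_mono mult_left_mono) auto
  then show "C21r s d \<le> Cap (p2 d * snd s)" by (simp add: algebra_simps)
qed


definition maxsel :: "real \<Rightarrow> real \<Rightarrow> real \<Rightarrow> chstate \<Rightarrow> decision \<Rightarrow> nat \<Rightarrow> bool" where
  "maxsel \<mu>1 \<mu>2 \<gamma> s d k \<longleftrightarrow> (\<forall>j\<in>{1..6}. \<forall>d'. admissible d' \<longrightarrow> Lam \<mu>1 \<mu>2 \<gamma> j s d' \<le> Lam \<mu>1 \<mu>2 \<gamma> k s d)"

lemma maxselD: "maxsel \<mu>1 \<mu>2 \<gamma> s d k \<Longrightarrow> j \<in> {1..6} \<Longrightarrow> admissible d' \<Longrightarrow> Lam \<mu>1 \<mu>2 \<gamma> j s d' \<le> Lam \<mu>1 \<mu>2 \<gamma> k s d"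
  unfolding maxsel_def by blast

lemma adm_upd:
  assumes "admissible d" "x \<ge> 0"
  shows "admissible (d\<lparr>p1 := x\<rparr>)" "admissible (d\<lparr>p2 := x\<rparr>)" "admissible (d\<lparr>pr := x\<rparr>)"
    "admissible (d\<lparr>p1 := 0, p2 := 0\<rparr>)"
  using assms by (auto simp: admissible_def)

lemma k_cases: "k \<in> {1..6::nat} \<Longrightarrow> k = 1 \<or> k = 2 \<or> k = 3 \<or> k = 4 \<or> k = 5 \<or> k = 6"
  by auto

lemma caseA:
  assumes m1: "\<mu>1 \<ge> 1" and g: "\<gamma> > 0" and u: "fst s > 0" and v: "snd s > 0"
    and ad: "admissible d" and k: "k \<in> {1..6}" and qk: "q d k = 1"
    and H: "maxsel \<mu>1 \<mu>2 \<gamma> s d k"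
  shows "rate_1r s d = 0" "rate_r2 s d = 0 \<longrightarrow> rate_r1 s d = 0"
proof -
  have nn: "0 \<le> p1 d" "0 \<le> p2 d" "0 \<le> pr d" using ad by (auto simp: admissible_def)
  have qo: "\<And>j. j \<in> {1..6} \<Longrightarrow> j \<noteq> k \<Longrightarrow> q d j = 0" using q_others[OF ad k qk] by blast
  have C1: "0 \<le> C12r s d" "C12r s d \<le> Cap (p1 d * fst s)" using C12r_bounds[OF ad] u v by auto
  have C2: "0 \<le> C21r s d" "C21r s d \<le> Cap (p2 d * snd s)" using C21r_bounds[OF ad] u v by auto
  have p1z: "p1 d = 0" if "k = 1 \<or> k = 3"
  proof -
    from that show ?thesis
    proof
      assume k1: "k = 1"
      have "Lam \<mu>1 \<mu>2 \<gamma> 1 s (d\<lparr>p1 := 0\<rparr>) \<le> Lam \<mu>1 \<mu>2 \<gamma> k s d"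
        by (rule maxselD[OF H]) (auto intro: adm_upd ad)
      then have "0 \<le> (1 - \<mu>1) * Cap (p1 d * fst s) - \<gamma> * p1 d" using k1 by (simp add: Lam_def)
      moreover have "(1 - \<mu>1) * Cap (p1 d * fst s) \<le> 0"
        using m1 Cap_nonneg[of "p1 d * fst s"] nn u by (intro mult_nonpos_nonneg) auto
      ultimately have "\<gamma> * p1 d \<le> 0" by linarith
      then show ?thesis using g nn by (smt (verit) mult_pos_pos)
    next
      assume k3: "k = 3"
      show ?thesis
      proof (cases "\<mu>2 \<le> 1")
        case True
        have "Lam \<mu>1 \<mu>2 \<gamma> 2 s d \<le> Lam \<mu>1 \<mu>2 \<gamma> k s d"
          by (rule maxselD[OF H]) (auto intro: ad)
        then have "(1 - \<mu>2) * Cap (p2 d * snd s) - \<gamma> * p2 d \<le> (1 - \<mu>1) * C12r s d + (1 - \<mu>2) * C21r s d - \<gamma> * (p1 d + p2 d)"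
          using k3 by (simp add: Lam_def)
        moreover have "(1 - \<mu>2) * C21r s d \<le> (1 - \<mu>2) * Cap (p2 d * snd s)"
          using True C2 by (intro mult_left_mono) auto
        moreover have "(1 - \<mu>1) * C12r s d \<le> 0" using m1 C1 by (intro mult_nonpos_nonneg) auto
        ultimately have "\<gamma> * p1 d \<le> 0" by (simp add: algebra_simps)
        then show ?thesis using g nn by (smt (verit) mult_pos_pos)
      next
        case False
        have "Lam \<mu>1 \<mu>2 \<gamma> 3 s (d\<lparr>p1 := 0, p2 := 0\<rparr>) \<le> Lam \<mu>1 \<mu>2 \<gamma> k s d"
          by (rule maxselD[OF H]) (auto intro: adm_upd ad)
        then have "0 \<le> (1 - \<mu>1) * C12r s d + (1 - \<mu>2) * C21r s d - \<gamma> * (p1 d + p2 d)"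
          using k3 by (simp add: Lam_def C12r_def C21r_def)
        moreover have "(1 - \<mu>2) * C21r s d \<le> 0"
          using False C2 by (intro mult_nonpos_nonneg) auto
        moreover have "(1 - \<mu>1) * C12r s d \<le> 0" using m1 C1 by (intro mult_nonpos_nonneg) auto
        moreover have "0 \<le> \<gamma> * p2 d" using g nn by simp
        ultimately have "\<gamma> * p1 d \<le> 0" by (simp add: algebra_simps)
        then show ?thesis using g nn by (smt (verit) mult_pos_pos)
      qed
    qed
  qed
  show "rate_1r s d = 0"
  proof -
    have "k = 1 \<or> k = 3 \<or> (q d 1 = 0 \<and> q d 3 = 0)" using k_cases[OF k] qo by fastforce
    moreover have "C12r s d = 0" if "p1 d = 0" using that by (simp add: C12r_def)
    ultimately show ?thesis using p1z qo unfolding rate_1r_def by fastforce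
  qed
  show "rate_r2 s d = 0 \<longrightarrow> rate_r1 s d = 0"
  proof
    assume r2: "rate_r2 s d = 0"
    have "k = 4 \<or> k = 6 \<or> (q d 4 = 0 \<and> q d 6 = 0)" using k_cases[OF k] qo by fastforce
    moreover have "pr d = 0" if "k = 4"
    proof -
      have "Lam \<mu>1 \<mu>2 \<gamma> 6 s d \<le> Lam \<mu>1 \<mu>2 \<gamma> k s d"
        by (rule maxselD[OF H]) (auto intro: ad)
      then have "\<mu>1 * Cap (pr d * snd s) \<le> 0" using that by (simp add: Lam_def)
      then have "Cap (pr d * snd s) \<le> 0" using m1
        by (smt (verit, best) mult_le_cancel_right1 mult_nonneg_nonneg Cap_nonneg nn v)
      then have "pr d * snd s = 0" using Cap_zero_iff[of "pr d * snd s"] Cap_nonneg[of "pr d * snd s"] nn v by auto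
      then show ?thesis using v by simp
    qed
    moreover have "pr d = 0" if "k = 6"
    proof -
      have "q d 5 = 0" using qo that by auto
      then have "Cap (pr d * snd s) = 0" using r2 that qk by (simp add: rate_r2_def)
      then have "pr d * snd s = 0" using Cap_zero_iff[of "pr d * snd s"] nn v by auto
      then show ?thesis using v by simp
    qed
    ultimately show "rate_r1 s d = 0" unfolding rate_r1_def by auto
  qed
qed


lemma caseB:
  assumes m2: "\<mu>2 \<ge> 1" and g: "\<gamma> > 0" and u: "fst s > 0" and v: "snd s > 0"
    and ad: "admissible d" and k: "k \<in> {1..6}" and qk: "q d k = 1"
    and H: "maxsel \<mu>1 \<mu>2 \<gamma> s d k"
  shows "rate_2r s d = 0" "rate_r1 s d = 0 \<longrightarrow> rate_r2 s d = 0"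
proof -
  have nn: "0 \<le> p1 d" "0 \<le> p2 d" "0 \<le> pr d" using ad by (auto simp: admissible_def)
  have qo: "\<And>j. j \<in> {1..6} \<Longrightarrow> j \<noteq> k \<Longrightarrow> q d j = 0" using q_others[OF ad k qk] by blast
  have C1: "0 \<le> C12r s d" "C12r s d \<le> Cap (p1 d * fst s)" using C12r_bounds[OF ad] u v by auto
  have C2: "0 \<le> C21r s d" "C21r s d \<le> Cap (p2 d * snd s)" using C21r_bounds[OF ad] u v by auto
  have p2z: "p2 d = 0" if "k = 2 \<or> k = 3"
  proof -
    from that show ?thesis
    proof
      assume k1: "k = 2"
      have "Lam \<mu>1 \<mu>2 \<gamma> 2 s (d\<lparr>p2 := 0\<rparr>) \<le> Lam \<mu>1 \<mu>2 \<gamma> k s d"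
        by (rule maxselD[OF H]) (auto intro: adm_upd ad)
      then have "0 \<le> (1 - \<mu>2) * Cap (p2 d * snd s) - \<gamma> * p2 d" using k1 by (simp add: Lam_def)
      moreover have "(1 - \<mu>2) * Cap (p2 d * snd s) \<le> 0"
        using m2 Cap_nonneg[of "p2 d * snd s"] nn v by (intro mult_nonpos_nonneg) auto
      ultimately have "\<gamma> * p2 d \<le> 0" by linarith
      then show ?thesis using g nn by (smt (verit) mult_pos_pos)
    next
      assume k3: "k = 3"
      show ?thesis
      proof (cases "\<mu>1 \<le> 1")
        case True
        have "Lam \<mu>1 \<mu>2 \<gamma> 1 s d \<le> Lam \<mu>1 \<mu>2 \<gamma> k s d"
          by (rule maxselD[OF H]) (auto intro: ad)
        then have "(1 - \<mu>1) * Cap (p1 d * fst s) - \<gamma> * p1 d \<le> (1 - \<mu>1) * C12r s d + (1 - \<mu>2) * C21r s d - \<gamma> * (p1 d + p2 d)"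
          using k3 by (simp add: Lam_def)
        moreover have "(1 - \<mu>1) * C12r s d \<le> (1 - \<mu>1) * Cap (p1 d * fst s)"
          using True C1 by (intro mult_left_mono) auto
        moreover have "(1 - \<mu>2) * C21r s d \<le> 0" using m2 C2 by (intro mult_nonpos_nonneg) auto
        ultimately have "\<gamma> * p2 d \<le> 0" by (simp add: algebra_simps)
        then show ?thesis using g nn by (smt (verit) mult_pos_pos)
      next
        case False
        have "Lam \<mu>1 \<mu>2 \<gamma> 3 s (d\<lparr>p1 := 0, p2 := 0\<rparr>) \<le> Lam \<mu>1 \<mu>2 \<gamma> k s d"
          by (rule maxselD[OF H]) (auto intro: adm_upd ad)
        then have "0 \<le> (1 - \<mu>1) * C12r s d + (1 - \<mu>2) * C21r s d - \<gamma> * (p1 d + p2 d)"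
          using k3 by (simp add: Lam_def C12r_def C21r_def)
        moreover have "(1 - \<mu>1) * C12r s d \<le> 0"
          using False C1 by (intro mult_nonpos_nonneg) auto
        moreover have "(1 - \<mu>2) * C21r s d \<le> 0" using m2 C2 by (intro mult_nonpos_nonneg) auto
        moreover have "0 \<le> \<gamma> * p1 d" using g nn by simp
        ultimately have "\<gamma> * p2 d \<le> 0" by (simp add: algebra_simps)
        then show ?thesis using g nn by (smt (verit) mult_pos_pos)
      qed
    qed
  qed
  show "rate_2r s d = 0"
  proof -
    have "k = 2 \<or> k = 3 \<or> (q d 2 = 0 \<and> q d 3 = 0)" using k_cases[OF k] qo by fastforce
    moreover have "C21r s d = 0" if "p2 d = 0" using that by (simp add: C21r_def)
    ultimately show ?thesis using p2z qo unfolding rate_2r_def by fastforce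
  qed
  show "rate_r1 s d = 0 \<longrightarrow> rate_r2 s d = 0"
  proof
    assume r1: "rate_r1 s d = 0"
    have "k = 5 \<or> k = 6 \<or> (q d 5 = 0 \<and> q d 6 = 0)" using k_cases[OF k] qo by fastforce
    moreover have "pr d = 0" if "k = 5"
    proof -
      have "Lam \<mu>1 \<mu>2 \<gamma> 6 s d \<le> Lam \<mu>1 \<mu>2 \<gamma> k s d"
        by (rule maxselD[OF H]) (auto intro: ad)
      then have "\<mu>2 * Cap (pr d * fst s) \<le> 0" using that by (simp add: Lam_def)
      then have "Cap (pr d * fst s) \<le> 0" using m2
        by (smt (verit, best) mult_le_cancel_right1 mult_nonneg_nonneg Cap_nonneg nn u)
      then have "pr d * fst s = 0" using Cap_zero_iff[of "pr d * fst s"] Cap_nonneg[of "pr d * fst s"] nn u by auto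
      then show ?thesis using u by simp
    qed
    moreover have "pr d = 0" if "k = 6"
    proof -
      have "q d 4 = 0" using qo that by auto
      then have "Cap (pr d * fst s) = 0" using r1 that qk by (simp add: rate_r1_def)
      then have "pr d * fst s = 0" using Cap_zero_iff[of "pr d * fst s"] nn u by auto
      then show ?thesis using u by simp
    qed
    ultimately show "rate_r2 s d = 0" unfolding rate_r2_def by auto
  qed
qed

lemma caseC:
  assumes m1: "\<mu>1 \<le> 0" and m2: "\<mu>2 < 1" and g: "\<gamma> > 0" and u: "fst s > 0" and v: "snd s > 0"
    and ad: "admissible d" and k: "k \<in> {1..6}" and qk: "q d k = 1"
    and H: "maxsel \<mu>1 \<mu>2 \<gamma> s d k"
  shows "rate_r1 s d = 0" "rate_r2 s d = 0"
proof -
  have nn: "0 \<le> p1 d" "0 \<le> p2 d" "0 \<le> pr d" using ad by (auto simp: admissible_def)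
  have qo: "\<And>j. j \<in> {1..6} \<Longrightarrow> j \<noteq> k \<Longrightarrow> q d j = 0" using q_others[OF ad k qk] by blast
  have c1: "0 \<le> Cap (pr d * fst s)" "0 \<le> Cap (pr d * snd s)" using Cap_nonneg nn u v by auto
  have fromC1: "pr d = 0" if "Cap (pr d * fst s) \<le> 0"
  proof -
    have "pr d * fst s = 0" using Cap_zero_iff[of "pr d * fst s"] c1 that nn u by auto
    then show ?thesis using u by simp
  qed
  have L1: "Lam \<mu>1 \<mu>2 \<gamma> 1 s (d\<lparr>p1 := pr d\<rparr>) \<le> Lam \<mu>1 \<mu>2 \<gamma> k s d"
    by (rule maxselD[OF H]) (auto intro: adm_upd ad nn)
  have prz: "pr d = 0" if "k = 4 \<or> k = 5 \<or> k = 6"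
  proof -
    from that consider "k = 4" | "k = 5" | "k = 6" by blast
    then show ?thesis
    proof cases
      case 1
      with L1 have "(1 - \<mu>1) * Cap (pr d * fst s) \<le> \<mu>2 * Cap (pr d * fst s)" by (simp add: Lam_def)
      then have "(1 - \<mu>1 - \<mu>2) * Cap (pr d * fst s) \<le> 0" by (simp add: algebra_simps)
      then show ?thesis using m1 m2 c1 fromC1 by (smt (verit) mult_pos_pos)
    next
      case 2
      have "Lam \<mu>1 \<mu>2 \<gamma> 5 s (d\<lparr>pr := 0\<rparr>) \<le> Lam \<mu>1 \<mu>2 \<gamma> k s d"
        by (rule maxselD[OF H]) (auto intro: adm_upd ad)
      with 2 have "0 \<le> \<mu>1 * Cap (pr d * snd s) - \<gamma> * pr d" by (simp add: Lam_def)
      moreover have "\<mu>1 * Cap (pr d * snd s) \<le> 0" using m1 c1 by (intro mult_nonpos_nonneg) auto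
      ultimately have "\<gamma> * pr d \<le> 0" by linarith
      then show ?thesis using g nn by (smt (verit) mult_pos_pos)
    next
      case 3
      with L1 have "(1 - \<mu>1) * Cap (pr d * fst s) \<le> \<mu>1 * Cap (pr d * snd s) + \<mu>2 * Cap (pr d * fst s)" by (simp add: Lam_def)
      moreover have "\<mu>1 * Cap (pr d * snd s) \<le> 0" using m1 c1 by (intro mult_nonpos_nonneg) auto
      ultimately have "(1 - \<mu>1 - \<mu>2) * Cap (pr d * fst s) \<le> 0" by (simp add: algebra_simps)
      then show ?thesis using m1 m2 c1 fromC1 by (smt (verit) mult_pos_pos)
    qed
  qed
  have "(k = 4 \<or> k = 5 \<or> k = 6) \<or> (q d 4 = 0 \<and> q d 5 = 0 \<and> q d 6 = 0)" using k_cases[OF k] qo by fastforce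
  then show "rate_r1 s d = 0" "rate_r2 s d = 0" using prz unfolding rate_r1_def rate_r2_def by auto
qed

lemma caseD:
  assumes m2: "\<mu>2 \<le> 0" and m1: "\<mu>1 < 1" and g: "\<gamma> > 0" and u: "fst s > 0" and v: "snd s > 0"
    and ad: "admissible d" and k: "k \<in> {1..6}" and qk: "q d k = 1"
    and H: "maxsel \<mu>1 \<mu>2 \<gamma> s d k"
  shows "rate_r1 s d = 0" "rate_r2 s d = 0"
proof -
  have nn: "0 \<le> p1 d" "0 \<le> p2 d" "0 \<le> pr d" using ad by (auto simp: admissible_def)
  have qo: "\<And>j. j \<in> {1..6} \<Longrightarrow> j \<noteq> k \<Longrightarrow> q d j = 0" using q_others[OF ad k qk] by blast
  have c1: "0 \<le> Cap (pr d * fst s)" "0 \<le> Cap (pr d * snd s)" using Cap_nonneg nn u v by auto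
  have fromC2: "pr d = 0" if "Cap (pr d * snd s) \<le> 0"
  proof -
    have "pr d * snd s = 0" using Cap_zero_iff[of "pr d * snd s"] c1 that nn v by auto
    then show ?thesis using v by simp
  qed
  have L2: "Lam \<mu>1 \<mu>2 \<gamma> 2 s (d\<lparr>p2 := pr d\<rparr>) \<le> Lam \<mu>1 \<mu>2 \<gamma> k s d"
    by (rule maxselD[OF H]) (auto intro: adm_upd ad nn)
  have prz: "pr d = 0" if "k = 4 \<or> k = 5 \<or> k = 6"
  proof -
    from that consider "k = 4" | "k = 5" | "k = 6" by blast
    then show ?thesis
    proof cases
      case 2
      with L2 have "(1 - \<mu>2) * Cap (pr d * snd s) \<le> \<mu>1 * Cap (pr d * snd s)" by (simp add: Lam_def)
      then have "(1 - \<mu>1 - \<mu>2) * Cap (pr d * snd s) \<le> 0" by (simp add: algebra_simps)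
      then show ?thesis using m1 m2 c1 fromC2 by (smt (verit) mult_pos_pos)
    next
      case 1
      have "Lam \<mu>1 \<mu>2 \<gamma> 4 s (d\<lparr>pr := 0\<rparr>) \<le> Lam \<mu>1 \<mu>2 \<gamma> k s d"
        by (rule maxselD[OF H]) (auto intro: adm_upd ad)
      with 1 have "0 \<le> \<mu>2 * Cap (pr d * fst s) - \<gamma> * pr d" by (simp add: Lam_def)
      moreover have "\<mu>2 * Cap (pr d * fst s) \<le> 0" using m2 c1 by (intro mult_nonpos_nonneg) auto
      ultimately have "\<gamma> * pr d \<le> 0" by linarith
      then show ?thesis using g nn by (smt (verit) mult_pos_pos)
    next
      case 3
      with L2 have "(1 - \<mu>2) * Cap (pr d * snd s) \<le> \<mu>1 * Cap (pr d * snd s) + \<mu>2 * Cap (pr d * fst s)" by (simp add: Lam_def)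
      moreover have "\<mu>2 * Cap (pr d * fst s) \<le> 0" using m2 c1 by (intro mult_nonpos_nonneg) auto
      ultimately have "(1 - \<mu>1 - \<mu>2) * Cap (pr d * snd s) \<le> 0" by (simp add: algebra_simps)
      then show ?thesis using m1 m2 c1 fromC2 by (smt (verit) mult_pos_pos)
    qed
  qed
  have "(k = 4 \<or> k = 5 \<or> k = 6) \<or> (q d 4 = 0 \<and> q d 5 = 0 \<and> q d 6 = 0)" using k_cases[OF k] qo by fastforce
  then show "rate_r1 s d = 0" "rate_r2 s d = 0" using prz unfolding rate_r1_def rate_r2_def by auto
qed


lemma Cap_unbounded:
  assumes c: "c > 0" and S: "S > 0"
  shows "\<exists>x\<ge>0. c * Cap (x * S) > B"
proof -
  define t where "t = B / c"
  define x where "x = 2 powr t / S"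
  have x0: "x \<ge> 0" using S by (simp add: x_def)
  have xs: "x * S = 2 powr t" using S by (simp add: x_def)
  have tt: "t = log 2 (2 powr t)" by simp
  have p: "0 < 2 powr t" by simp
  have "log 2 (2 powr t) < log 2 (1 + 2 powr t)" using p log_less_cancel_iff[of 2 "2 powr t" "1 + 2 powr t"] by linarith
  then have "t < Cap (x * S)" using tt by (simp add: Cap_def xs)
  then have "c * t < c * Cap (x * S)" using c by simp
  then show ?thesis using x0 c by (auto simp: t_def)
qed

lemma gamma_not0:
  assumes g: "\<gamma> = 0" and u: "fst s > 0" and v: "snd s > 0"
    and ad: "admissible d" and H: "maxsel \<mu>1 \<mu>2 \<gamma> s d k"
  shows False
proof (cases "\<mu>1 < 1")
  case True
  then obtain x where x: "x \<ge> 0" "(1 - \<mu>1) * Cap (x * fst s) > Lam \<mu>1 \<mu>2 \<gamma> k s d"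
    using Cap_unbounded[of "1 - \<mu>1" "fst s"] u by auto
  have "Lam \<mu>1 \<mu>2 \<gamma> 1 s (d\<lparr>p1 := x\<rparr>) \<le> Lam \<mu>1 \<mu>2 \<gamma> k s d"
    by (rule maxselD[OF H]) (auto intro: adm_upd ad x)
  then show False using x g by (simp add: Lam_def)
next
  case False
  then obtain x where x: "x \<ge> 0" "\<mu>1 * Cap (x * snd s) > Lam \<mu>1 \<mu>2 \<gamma> k s d"
    using Cap_unbounded[of "\<mu>1" "snd s"] v by auto
  have "Lam \<mu>1 \<mu>2 \<gamma> 5 s (d\<lparr>pr := x\<rparr>) \<le> Lam \<mu>1 \<mu>2 \<gamma> k s d"
    by (rule maxselD[OF H]) (auto intro: adm_upd ad x)
  then show False using x g by (simp add: Lam_def)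
qed


definition wP :: "real \<Rightarrow> chstate \<Rightarrow> real" where
  "wP Pt s = (if fst s > 0 \<and> snd s > 0 then Pt / (1 + fst s + snd s) else 0)"
definition wA :: "real \<Rightarrow> chstate \<Rightarrow> real" where
  "wA Pt s = Cap (wP Pt s * fst s)"
definition wB :: "real \<Rightarrow> chstate \<Rightarrow> real" where
  "wB Pt s = Cap (wP Pt s * snd s)"
definition wq :: "real \<Rightarrow> chstate \<Rightarrow> nat \<Rightarrow> real" where
  "wq Pt s k = (if wA Pt s + wB Pt s = 0 then (if k = 1 then 1 else 0)
     else if k = 1 \<or> k = 4 then wB Pt s / (2 * (wA Pt s + wB Pt s))
     else if k = 2 \<or> k = 5 then wA Pt s / (2 * (wA Pt s + wB Pt s)) else 0)"
definition wg :: "real \<Rightarrow> chstate \<Rightarrow> real" where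
  "wg Pt s = (if wA Pt s + wB Pt s = 0 then 0 else wA Pt s * wB Pt s / (2 * (wA Pt s + wB Pt s)))"
definition wpol :: "real \<Rightarrow> policy" where
  "wpol Pt s = \<lparr>q = wq Pt s, p1 = wP Pt s, p2 = wP Pt s, pr = wP Pt s, ts = 0\<rparr>"

lemma wP_props:
  assumes "Pt > 0"
  shows "0 \<le> wP Pt s" "wP Pt s \<le> Pt" "wP Pt s * fst s \<le> Pt" "wP Pt s * snd s \<le> Pt"
    "0 \<le> wP Pt s * fst s" "0 \<le> wP Pt s * snd s"
    "fst s > 0 \<Longrightarrow> snd s > 0 \<Longrightarrow> wP Pt s * fst s > 0 \<and> wP Pt s * snd s > 0"
proof -
  show "0 \<le> wP Pt s" using assms by (simp add: wP_def)
  show "wP Pt s \<le> Pt" using assms by (auto simp: wP_def divide_le_eq)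
  show "wP Pt s * fst s \<le> Pt" using assms by (auto simp: wP_def divide_le_eq algebra_simps)
  show "wP Pt s * snd s \<le> Pt" using assms by (auto simp: wP_def divide_le_eq algebra_simps)
  show "0 \<le> wP Pt s * fst s" using assms by (auto simp: wP_def)
  show "0 \<le> wP Pt s * snd s" using assms by (auto simp: wP_def)
  show "fst s > 0 \<Longrightarrow> snd s > 0 \<Longrightarrow> wP Pt s * fst s > 0 \<and> wP Pt s * snd s > 0"
    using assms by (auto simp: wP_def)
qed

lemma wAB:
  assumes "Pt > 0"
  shows "0 \<le> wA Pt s" "0 \<le> wB Pt s" "wA Pt s \<le> Cap Pt" "wB Pt s \<le> Cap Pt"
    "fst s > 0 \<Longrightarrow> snd s > 0 \<Longrightarrow> wA Pt s > 0 \<and> wB Pt s > 0"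
  using wP_props[OF assms, of s] Cap_nonneg Cap_mono Cap_pos
  unfolding wA_def wB_def by auto

lemma wg_props:
  assumes "Pt > 0"
  shows "0 \<le> wg Pt s" "wg Pt s \<le> Cap Pt" "fst s > 0 \<Longrightarrow> snd s > 0 \<Longrightarrow> wg Pt s > 0"
proof -
  note ab = wAB[OF assms, of s]
  show "0 \<le> wg Pt s" using ab by (simp add: wg_def)
  show "wg Pt s \<le> Cap Pt"
  proof (cases "wA Pt s + wB Pt s = 0")
    case True then show ?thesis using ab by (simp add: wg_def)
  next
    case False
    then have pos: "wA Pt s + wB Pt s > 0" using ab by linarith
    have "wA Pt s * wB Pt s \<le> wA Pt s * (2 * (wA Pt s + wB Pt s))"
      using ab by (intro mult_left_mono) auto
    then have "wA Pt s * wB Pt s / (2 * (wA Pt s + wB Pt s)) \<le> wA Pt s"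
      using pos by (simp add: divide_le_eq)
    then show ?thesis using False ab by (simp add: wg_def)
  qed
  show "fst s > 0 \<Longrightarrow> snd s > 0 \<Longrightarrow> wg Pt s > 0" using ab by (auto simp: wg_def)
qed

lemma half_sum: "(x::real) + y > 0 \<Longrightarrow> y / (2 * (x + y)) + x / (2 * (x + y)) = 1/2"
proof -
  assume h: "x + y > 0"
  have "y / (2 * (x + y)) + x / (2 * (x + y)) = (x + y) / (2 * (x + y))"
    by (simp add: add_divide_distrib[symmetric] add.commute)
  also have "\<dots> = 1/2" using h by simp
  finally show ?thesis .
qed

lemma wpol_pt:
  assumes "Pt > 0"
  shows "admissible (wpol Pt s)" "rate_1r s (wpol Pt s) = wg Pt s" "rate_2r s (wpol Pt s) = wg Pt s"
    "rate_r1 s (wpol Pt s) = wg Pt s" "rate_r2 s (wpol Pt s) = wg Pt s" "power (wpol Pt s) = wP Pt s"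
proof -
  note ab = wAB[OF assms, of s]
  note pp = wP_props[OF assms, of s]
  show "admissible (wpol Pt s)"
  proof (cases "wA Pt s + wB Pt s = 0")
    case True then show ?thesis using pp
      by (auto simp: admissible_def wpol_def wq_def eval_nat_numeral)
  next
    case False
    then have pos: "wA Pt s + wB Pt s > 0" using ab by linarith
    have a1: "wA Pt s / (2 * (wA Pt s + wB Pt s)) \<le> 1" using pos ab by (simp add: divide_le_eq)
    have b1: "wB Pt s / (2 * (wA Pt s + wB Pt s)) \<le> 1" using pos ab by (simp add: divide_le_eq)
    have sm: "wB Pt s / (2 * (wA Pt s + wB Pt s)) + wA Pt s / (2 * (wA Pt s + wB Pt s)) + 0 + wB Pt s / (2 * (wA Pt s + wB Pt s)) + wA Pt s / (2 * (wA Pt s + wB Pt s)) + 0 = 1"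
      using half_sum[OF pos] by linarith
    show ?thesis using False pp ab a1 b1 sm
      by (auto simp: admissible_def wpol_def wq_def eval_nat_numeral)
  qed
  show "rate_1r s (wpol Pt s) = wg Pt s" "rate_2r s (wpol Pt s) = wg Pt s"
    "rate_r1 s (wpol Pt s) = wg Pt s" "rate_r2 s (wpol Pt s) = wg Pt s"
    using ab unfolding rate_1r_def rate_2r_def rate_r1_def rate_r2_def wpol_def
    by (simp_all add: wA_def[symmetric] wB_def[symmetric] wq_def wg_def add_nonneg_eq_0_iff)
  show "power (wpol Pt s) = wP Pt s"
  proof (cases "wA Pt s + wB Pt s = 0")
    case True then show ?thesis by (simp add: power_def wpol_def wq_def)
  next
    case False
    then have pos: "wA Pt s + wB Pt s > 0" using ab by linarith
    have sm: "wB Pt s / (2 * (wA Pt s + wB Pt s)) + wA Pt s / (2 * (wA Pt s + wB Pt s)) + wB Pt s / (2 * (wA Pt s + wB Pt s)) + wA Pt s / (2 * (wA Pt s + wB Pt s)) = 1"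
      using half_sum[OF pos] by linarith
    have "power (wpol Pt s) = (wB Pt s / (2 * (wA Pt s + wB Pt s)) + wA Pt s / (2 * (wA Pt s + wB Pt s)) + wB Pt s / (2 * (wA Pt s + wB Pt s)) + wA Pt s / (2 * (wA Pt s + wB Pt s))) * wP Pt s"
      using False by (simp add: power_def wpol_def wq_def algebra_simps)
    then show ?thesis using sm by simp
  qed
qed


lemma witness:
  assumes ps: "prob_space M" and sM: "sets M = sets borel"
    and ae: "AE s in M. fst s > 0 \<and> snd s > 0" and Pt: "Pt > 0"
  shows "feasible M Pt (wpol Pt) \<and> sum_rate M (wpol Pt) > 0"
proof -
  interpret prob_space M by (rule ps)
  have meq0: "borel_measurable M = borel_measurable (borel :: (real \<times> real) measure)"
    by (rule measurable_cong_sets[OF sM refl])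
  have meq: "borel_measurable M = borel_measurable (borel \<Otimes>\<^sub>M borel :: (real \<times> real) measure)"
    unfolding meq0 by (simp add: borel_prod)
  have mP: "wP Pt \<in> borel_measurable M" unfolding meq wP_def by measurable
  have mg: "wg Pt \<in> borel_measurable M" unfolding meq wg_def wA_def wB_def wP_def Cap_def by measurable
  have ig: "integrable M (wg Pt)"
    by (rule integrable_const_bound[where B="Cap Pt"]) (use wg_props[OF Pt] mg in auto)
  have iP: "integrable M (wP Pt)"
    by (rule integrable_const_bound[where B="Pt"]) (use wP_props[OF Pt] mP in auto)
  have r1: "(\<lambda>s. rate_1r s (wpol Pt s)) = wg Pt" "(\<lambda>s. rate_2r s (wpol Pt s)) = wg Pt"
    "(\<lambda>s. rate_r1 s (wpol Pt s)) = wg Pt" "(\<lambda>s. rate_r2 s (wpol Pt s)) = wg Pt"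
    "(\<lambda>s. power (wpol Pt s)) = wP Pt"
    using wpol_pt[OF Pt] by auto
  have "integral\<^sup>L M (wP Pt) \<le> integral\<^sup>L M (\<lambda>_. Pt)"
    by (rule integral_mono) (use iP wP_props[OF Pt] in auto)
  then have pw: "avg M (wP Pt) \<le> Pt" by (simp add: avg_def prob_space)
  have g0: "integral\<^sup>L M (wg Pt) \<noteq> 0"
  proof
    assume "integral\<^sup>L M (wg Pt) = 0"
    then have "AE s in M. wg Pt s = 0"
      using integral_nonneg_eq_0_iff_AE[OF ig] wg_props[OF Pt] by auto
    with ae have "AE s in M. False"
    proof eventually_elim
      case (elim s)
      then show False using wg_props(3)[OF Pt, of s] by simp
    qed
    then show False by (simp add: AE_False)
  qed
  have "0 \<le> integral\<^sup>L M (wg Pt)" using wg_props[OF Pt] by (simp add: integral_nonneg)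
  with g0 have gp: "0 < integral\<^sup>L M (wg Pt)" by linarith
  show ?thesis
    unfolding feasible_def sum_rate_def r1 using wpol_pt(1)[OF Pt] ig iP pw gp by (auto simp: avg_def)
qed


lemma rates_nonneg:
  assumes "admissible d" "fst s \<ge> 0" "snd s \<ge> 0"
  shows "0 \<le> rate_1r s d" "0 \<le> rate_2r s d" "0 \<le> rate_r1 s d" "0 \<le> rate_r2 s d"
proof -
  have q: "\<forall>i\<in>{1..6}. 0 \<le> q d i" and p: "0 \<le> p1 d" "0 \<le> p2 d" "0 \<le> pr d"
    using assms(1) by (auto simp: admissible_def)
  have q': "0 \<le> q d 1" "0 \<le> q d 2" "0 \<le> q d 3" "0 \<le> q d 4" "0 \<le> q d 5" "0 \<le> q d 6" using q by auto
  have c: "0 \<le> Cap (p1 d * fst s)" "0 \<le> Cap (p2 d * snd s)" "0 \<le> Cap (pr d * fst s)" "0 \<le> Cap (pr d * snd s)"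
    using p assms by (auto intro!: Cap_nonneg)
  have C: "0 \<le> C12r s d" "0 \<le> C21r s d" using C12r_bounds[OF assms] C21r_bounds[OF assms] by auto
  show "0 \<le> rate_1r s d" "0 \<le> rate_2r s d" "0 \<le> rate_r1 s d" "0 \<le> rate_r2 s d"
    unfolding rate_1r_def rate_2r_def rate_r1_def rate_r2_def using q' c C by auto
qed

lemma null_line_fst:
  assumes "prob_space M" "sets M = sets (borel :: (real \<times> real) measure)" "measure M {s. fst s = x} = 0"
  shows "AE s in M. fst s \<noteq> x"
proof -
  interpret prob_space M by fact
  have "{s::real \<times> real. fst s = x} \<in> sets borel"
    by (intro borel_closed closed_Collect_eq continuous_intros)
  then have S: "{s::real \<times> real. fst s = x} \<in> sets M" using assms(2) by simp
  then have "emeasure M {s. fst s = x} = 0" using assms(3) by (simp add: emeasure_eq_measure)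
  then have "{s. fst s = x} \<in> null_sets M" using S by blast
  from AE_not_in[OF this] show ?thesis by simp
qed

lemma null_line_snd:
  assumes "prob_space M" "sets M = sets (borel :: (real \<times> real) measure)" "measure M {s. snd s = x} = 0"
  shows "AE s in M. snd s \<noteq> x"
proof -
  interpret prob_space M by fact
  have "{s::real \<times> real. snd s = x} \<in> sets borel"
    by (intro borel_closed closed_Collect_eq continuous_intros)
  then have S: "{s::real \<times> real. snd s = x} \<in> sets M" using assms(2) by simp
  then have "emeasure M {s. snd s = x} = 0" using assms(3) by (simp add: emeasure_eq_measure)
  then have "{s. snd s = x} \<in> null_sets M" using S by blast
  from AE_not_in[OF this] show ?thesis by simp
qed

theorem mainTheorem5:
  fixes M :: "(real \<times> real) measure" and Pt :: real and pol :: policy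
    and \<mu>1 \<mu>2 \<gamma> :: real
  assumes "prob_space M"
    and "sets M = sets borel"
    and "AE s in M. 0 \<le> fst s \<and> 0 \<le> snd s"
    and "\<And>x. measure M {s. fst s = x} = 0"
    and "\<And>x. measure M {s. snd s = x} = 0"
    and "0 < Pt"
    and "optimal M Pt pol"
    and "kkt_multipliers M Pt pol \<mu>1 \<mu>2 \<gamma>"
  shows "0 < \<mu>1 \<and> \<mu>1 < 1 \<and> 0 < \<mu>2 \<and> \<mu>2 < 1"
proof (rule ccontr)
  assume bad: "\<not> (0 < \<mu>1 \<and> \<mu>1 < 1 \<and> 0 < \<mu>2 \<and> \<mu>2 < 1)"
  interpret prob_space M by fact
  have aepos: "AE s in M. fst s > 0 \<and> snd s > 0"
    using assms(3) null_line_fst[OF assms(1,2) assms(4)[of 0]] null_line_snd[OF assms(1,2) assms(5)[of 0]]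
    by eventually_elim auto
  have fe: "feasible M Pt pol" and opt: "\<And>pol'. feasible M Pt pol' \<Longrightarrow> sum_rate M pol' \<le> sum_rate M pol"
    using assms(7) unfolding optimal_def by auto
  have ad: "\<And>s. admissible (pol s)" using fe unfolding feasible_def by auto
  have int: "integrable M (\<lambda>s. rate_1r s (pol s))" "integrable M (\<lambda>s. rate_2r s (pol s))"
    "integrable M (\<lambda>s. rate_r1 s (pol s))" "integrable M (\<lambda>s. rate_r2 s (pol s))"
    using fe unfolding feasible_def by auto
  have eq1: "avg M (\<lambda>s. rate_1r s (pol s)) = avg M (\<lambda>s. rate_r2 s (pol s))"
    and eq2: "avg M (\<lambda>s. rate_2r s (pol s)) = avg M (\<lambda>s. rate_r1 s (pol s))"
    using fe unfolding feasible_def by auto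
  have g0: "0 \<le> \<gamma>" using assms(8) unfolding kkt_multipliers_def by auto
  have aek: "AE s in M. fst s > 0 \<and> snd s > 0 \<and> (\<exists>k\<in>{1..6}. q (pol s) k = 1 \<and> maxsel \<mu>1 \<mu>2 \<gamma> s (pol s) k)"
  proof -
    have "AE s in M. \<exists>k\<in>{1..6}. q (pol s) k = 1 \<and>
        (\<forall>j\<in>{1..6}. \<forall>d. admissible d \<longrightarrow> Lam \<mu>1 \<mu>2 \<gamma> j s d \<le> Lam \<mu>1 \<mu>2 \<gamma> k s (pol s))"
      using assms(8) unfolding kkt_multipliers_def by auto
    with aepos show ?thesis unfolding maxsel_def by eventually_elim auto
  qed
  have gp: "\<gamma> > 0"
  proof (rule ccontr)
    assume "\<not> \<gamma> > 0"
    then have "\<gamma> = 0" using g0 by simp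
    have "AE s in M. False" using aek
    proof eventually_elim
      case (elim s)
      then obtain k where k: "maxsel \<mu>1 \<mu>2 \<gamma> s (pol s) k" by auto
      have u: "fst s > 0" and v: "snd s > 0" using elim by auto
      show False by (rule gamma_not0[OF \<open>\<gamma> = 0\<close> u v ad k])
    qed
    then show False by (simp add: AE_False)
  qed
  have nn: "AE s in M. 0 \<le> rate_1r s (pol s) \<and> 0 \<le> rate_2r s (pol s) \<and> 0 \<le> rate_r1 s (pol s) \<and> 0 \<le> rate_r2 s (pol s)"
    using assms(3) by eventually_elim (use rates_nonneg ad in auto)
  have zero_of_AE: "avg M f = 0" if "AE s in M. f s = 0" for f
    unfolding avg_def using that by (rule integral_eq_zero_AE)
  have AE_of_zero: "AE s in M. f s = 0" if "integrable M f" "AE s in M. 0 \<le> f s" "avg M f = 0" for f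
    using that integral_nonneg_eq_0_iff_AE[of M f] unfolding avg_def by auto
  have sr0: "sum_rate M pol = 0"
  proof -
    consider "\<mu>1 \<ge> 1" | "\<mu>2 \<ge> 1" | "\<mu>1 \<le> 0" "\<mu>2 < 1" | "\<mu>2 \<le> 0" "\<mu>1 < 1" using bad by linarith
    then show ?thesis
    proof cases
      case 1
      have A: "AE s in M. rate_1r s (pol s) = 0 \<and> (rate_r2 s (pol s) = 0 \<longrightarrow> rate_r1 s (pol s) = 0)"
        using aek by eventually_elim (use caseA[OF 1 gp _ _ ad] in blast)
      have z1: "avg M (\<lambda>s. rate_1r s (pol s)) = 0" using A by (intro zero_of_AE) (auto elim: AE_mp)
      have "AE s in M. rate_r2 s (pol s) = 0"
        using z1 eq1 nn by (intro AE_of_zero int) (auto elim: AE_mp)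
      with A have "AE s in M. rate_r1 s (pol s) = 0" by eventually_elim auto
      then have "avg M (\<lambda>s. rate_r1 s (pol s)) = 0" by (rule zero_of_AE)
      then show ?thesis using z1 eq2 by (simp add: sum_rate_def)
    next
      case 2
      have A: "AE s in M. rate_2r s (pol s) = 0 \<and> (rate_r1 s (pol s) = 0 \<longrightarrow> rate_r2 s (pol s) = 0)"
        using aek by eventually_elim (use caseB[OF 2 gp _ _ ad] in blast)
      have z1: "avg M (\<lambda>s. rate_2r s (pol s)) = 0" using A by (intro zero_of_AE) (auto elim: AE_mp)
      have "AE s in M. rate_r1 s (pol s) = 0"
        using z1 eq2 nn by (intro AE_of_zero int) (auto elim: AE_mp)
      with A have "AE s in M. rate_r2 s (pol s) = 0" by eventually_elim auto
      then have "avg M (\<lambda>s. rate_r2 s (pol s)) = 0" by (rule zero_of_AE)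
      then show ?thesis using z1 eq1 by (simp add: sum_rate_def)
    next
      case 3
      have A: "AE s in M. rate_r1 s (pol s) = 0 \<and> rate_r2 s (pol s) = 0"
        using aek by eventually_elim (use caseC[OF 3 gp _ _ ad] in blast)
      have "avg M (\<lambda>s. rate_r1 s (pol s)) = 0" "avg M (\<lambda>s. rate_r2 s (pol s)) = 0"
        using A by (auto intro!: zero_of_AE elim: AE_mp)
      then show ?thesis using eq1 eq2 by (simp add: sum_rate_def)
    next
      case 4
      have A: "AE s in M. rate_r1 s (pol s) = 0 \<and> rate_r2 s (pol s) = 0"
        using aek by eventually_elim (use caseD[OF 4 gp _ _ ad] in blast)
      have "avg M (\<lambda>s. rate_r1 s (pol s)) = 0" "avg M (\<lambda>s. rate_r2 s (pol s)) = 0"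
        using A by (auto intro!: zero_of_AE elim: AE_mp)
      then show ?thesis using eq1 eq2 by (simp add: sum_rate_def)
    qed
  qed
  have "feasible M Pt (wpol Pt) \<and> sum_rate M (wpol Pt) > 0"
    using witness[OF assms(1,2) aepos assms(6)] .
  with opt sr0 show False by force
qed

end
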